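(* Let $\nu\ge 1/2$ and let $$\mathcal{B}_{\nu}(z)= \sum_{n=0}^\infty \frac{ \Gamma(\nu+1)\,\Gamma\!\left(\frac{n+1}{2}\right)}{\sqrt{\pi}\, n!\, \Gamma\!\left(\frac{n}{2}+\nu+1\right)}\, z^n ,\qquad z\in\mathbb{D}=\{z\in\mathbb{C}:|z|<1\}.$$ Then the function $f(z)=z\mathcal{B}_\nu(z)$ is starlike (univalent) in $\mathbb{D}$. Moreover, $f$ is close-to-convex with respect to the starlike function $g(z)=z$ and also with respect to the starlike function $g(z)=z/(1-z)$.
   Context: $\mathcal{B}_\nu$ is the Bessel–Struve kernel function; $f(z)=z\mathcal{B}_\nu(z)$ satisfies $f(0)=0$, $f'(0)=1$. A function $f$ analytic in $\mathbb{D}$ with $f(0)=0,f'(0)=1$ is starlike if $f$ is univalent and $f(\mathbb{D})$ is starlike with respect to the origin, equivalently $\operatorname{Re}(zf'(z)/f(z))>0$ on $\mathbb{D}$. Given a starlike function $g$, $f$ is close-to-convex with respect to $g$ if there exists a real $\beta$ such that $\operatorname{Re}\left(e^{i\beta}\, z f'(z)/g(z)\right)>0$ for all $z\in\mathbb{D}$. *)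

theory Defs
  imports "HOL-Complex_Analysis.Complex_Analysis"
begin

definition BS_coeff :: "real \<Rightarrow> nat \<Rightarrow> real" where
  "BS_coeff \<nu> n = Gamma (\<nu> + 1) * Gamma ((real n + 1) / 2) /
      (sqrt pi * fact n * Gamma (real n / 2 + \<nu> + 1))"

definition BesselStruve :: "real \<Rightarrow> complex \<Rightarrow> complex" where
  "BesselStruve \<nu> z = (\<Sum>n. complex_of_real (BS_coeff \<nu> n) * z ^ n)"

definition normalized_on_disc :: "(complex \<Rightarrow> complex) \<Rightarrow> bool" where
  "normalized_on_disc f \<longleftrightarrow> f holomorphic_on ball 0 1 \<and> f 0 = 0 \<and> deriv f 0 = 1"

text \<open>Starlike: univalent and Re(z f'(z)/f(z)) > 0 on the disc; at z = 0 the quotient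
  is understood as its (removable) value 1, which is positive, so only z \<noteq> 0 is checked.\<close>
definition starlike_disc :: "(complex \<Rightarrow> complex) \<Rightarrow> bool" where
  "starlike_disc f \<longleftrightarrow> normalized_on_disc f \<and> inj_on f (ball 0 1) \<and>
     (\<forall>z\<in>ball 0 1. z \<noteq> 0 \<longrightarrow> Re (z * deriv f z / f z) > 0)"

text \<open>Close-to-convex with respect to g: some real beta with Re(e^{i beta} z f'(z)/g(z)) > 0
  on the disc; at z = 0 the quotient takes its removable value f'(0)/g'(0).\<close>
definition ctc_quot :: "(complex \<Rightarrow> complex) \<Rightarrow> (complex \<Rightarrow> complex) \<Rightarrow> complex \<Rightarrow> complex" where
  "ctc_quot f g z = (if z = 0 then deriv f 0 / deriv g 0 else z * deriv f z / g z)"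

definition close_to_convex_wrt :: "(complex \<Rightarrow> complex) \<Rightarrow> (complex \<Rightarrow> complex) \<Rightarrow> bool" where
  "close_to_convex_wrt f g \<longleftrightarrow> normalized_on_disc f \<and>
     (\<exists>\<beta>::real. \<forall>z\<in>ball 0 1. Re (exp (\<i> * complex_of_real \<beta>) * ctc_quot f g z) > 0)"

end

theory Submission
  imports Defs
begin


lemma exp_partial_le:
  fixes r :: real assumes "0 \<le> r"
  shows "(\<Sum>n<k. r^n / fact n) \<le> exp r"
proof -
  have s: "(\<lambda>n. r^n / fact n) sums exp r" using exp_converges[of r] by (simp add: divide_inverse_commute scaleR_conv_of_real)
  show ?thesis
    using sum_le_suminf[OF sums_summable[OF s], of "{..<k}"] sums_unique[OF s] assms by auto
qed

lemma series_integral: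
  fixes \<rho> :: "real \<Rightarrow> real" and M :: "nat \<Rightarrow> real" and z :: complex
  assumes nn: "\<And>u. u \<in> {0..1} \<Longrightarrow> 0 \<le> \<rho> u"
    and mom: "\<And>n. ((\<lambda>u. \<rho> u * sqrt u ^ n) has_integral M n) {0..1}"
  shows "((\<lambda>u. of_real (\<rho> u) * exp (of_real (sqrt u) * z)) has_integral
            (\<Sum>n. of_real (M n / fact n) * z^n)) {0..1}
       \<and> (\<lambda>n. of_real (M n / fact n) * z^n) sums (\<Sum>n. of_real (M n / fact n) * z^n)"
proof -
  define F where "F k u = (\<Sum>n<k. of_real (\<rho> u * sqrt u ^ n) * (z^n / fact n))" for k u
  define g where "g u = of_real (\<rho> u) * exp (of_real (sqrt u) * z)" for u
  define h where "h u = \<rho> u * exp (norm z)" for u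
  have Fint: "(F k has_integral (\<Sum>n<k. of_real (M n / fact n) * z^n)) {0..1}" for k
  proof -
    have "((\<lambda>u. of_real (\<rho> u * sqrt u ^ n) * (z^n / fact n)) has_integral
            of_real (M n / fact n) * z^n) {0..1}" for n
      using has_integral_mult_left[OF has_integral_of_real[OF mom[of n]], of "z^n/fact n"]
      by (simp add: divide_inverse mult_ac)
    then show ?thesis unfolding F_def by (intro has_integral_sum) auto
  qed
  have hint: "h integrable_on {0..1}"
    using has_integral_mult_left[OF mom[of 0], of "exp (norm z)"] unfolding h_def
    by (auto simp: integrable_on_def)
  have le: "norm (F k u) \<le> h u" if u: "u \<in> {0..1}" for k u
  proof -
    have "norm (F k u) \<le> (\<Sum>n<k. norm (of_real (\<rho> u * sqrt u ^ n) * (z^n / fact n)))"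
      unfolding F_def by (rule norm_sum)
    also have "\<dots> \<le> (\<Sum>n<k. \<rho> u * (norm z ^ n / fact n))"
    proof (rule sum_mono)
      fix n
      have "sqrt u ^ n \<le> 1" using u by (auto intro!: power_le_one)
      moreover have "0 \<le> sqrt u ^ n" using u by auto
      ultimately show "norm (of_real (\<rho> u * sqrt u ^ n) * (z^n / fact n)) \<le> \<rho> u * (norm z ^ n / fact n)"
      proof -
        have a: "\<bar>sqrt u\<bar> ^ n = sqrt u ^ n" using u by simp
        have "\<rho> u * sqrt u ^ n * (norm z ^ n / fact n) \<le> \<rho> u * 1 * (norm z ^ n / fact n)"
          using nn[OF u] \<open>sqrt u ^ n \<le> 1\<close>
          by (intro mult_right_mono mult_left_mono) auto
        then show ?thesis using nn[OF u]
          by (simp add: norm_mult norm_divide norm_power a)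
      qed
    qed
    also have "\<dots> = \<rho> u * (\<Sum>n<k. norm z ^ n / fact n)" by (simp add: sum_distrib_left)
    also have "\<dots> \<le> h u" unfolding h_def
      using nn[OF u] exp_partial_le[of "norm z" k] by (auto intro!: mult_left_mono)
    finally show ?thesis .
  qed
  have conv: "(\<lambda>k. F k u) \<longlonglongrightarrow> g u" for u
  proof -
    have e: "(\<lambda>n. (of_real (sqrt u) * z)^n / fact n) sums exp (of_real (sqrt u) * z)"
      using exp_converges[of "of_real (sqrt u) * z"] by (simp add: scaleR_conv_of_real divide_inverse mult_ac)
    have "F k u = of_real (\<rho> u) * (\<Sum>n<k. (of_real (sqrt u) * z)^n / fact n)" for k
      unfolding F_def by (simp add: sum_distrib_left power_mult_distrib mult_ac)
    then show ?thesis unfolding g_def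
      using tendsto_mult_left[OF e[unfolded sums_def]] by simp
  qed
  have F_integrable: "F k integrable_on {0..1}" for k using Fint by blast
  note dc = dominated_convergence[OF F_integrable hint le conv]
  have "(\<lambda>k. (\<Sum>n<k. of_real (M n / fact n) * z^n)) \<longlonglongrightarrow> integral {0..1} g"
  proof -
    have "integral {0..1} (F k) = (\<Sum>n<k. of_real (M n / fact n) * z^n)" for k
      using Fint[of k] by (rule integral_unique)
    then show ?thesis using dc(2) by simp
  qed
  hence s: "(\<lambda>n. of_real (M n / fact n) * z^n) sums integral {0..1} g" by (simp add: sums_def)
  show ?thesis using s sums_unique[OF s] dc(1) unfolding g_def[symmetric]
    by (metis has_integral_iff)
qed



definition cone :: "complex \<Rightarrow> complex \<Rightarrow> bool" where
 "cone z F \<longleftrightarrow> (\<exists>L>0. \<forall>c m. (\<forall>s\<in>{0..1}. m \<le> Re (c * exp (of_real s * z))) \<longrightarrow> m * L \<le> Re (c * F))"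

lemma cone_integral:
  fixes \<rho> :: "real \<Rightarrow> real" and M :: "nat \<Rightarrow> real" and z :: complex
  assumes nn: "\<And>u. u \<in> {0..1} \<Longrightarrow> 0 \<le> \<rho> u"
    and mom: "\<And>n. ((\<lambda>u. \<rho> u * sqrt u ^ n) has_integral M n) {0..1}"
    and pos: "M 0 > 0"
  shows "cone z (\<Sum>n. of_real (M n / fact n) * z^n)"
  unfolding cone_def
proof (intro exI[of _ "M 0"] conjI allI impI pos)
  fix c :: complex and m :: real
  assume H: "\<forall>s\<in>{0..1}. m \<le> Re (c * exp (of_real s * z))"
  let ?I = "(\<Sum>n. of_real (M n / fact n) * z^n)"
  have I: "((\<lambda>u. of_real (\<rho> u) * exp (of_real (sqrt u) * z)) has_integral ?I) {0..1}"
    using series_integral[OF nn mom] by blast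
  have 1: "((\<lambda>u. Re (c * (of_real (\<rho> u) * exp (of_real (sqrt u) * z)))) has_integral Re (c * ?I)) {0..1}"
    using has_integral_Re[OF has_integral_mult_right[OF I, of c]] .
  have 2: "((\<lambda>u. m * \<rho> u) has_integral m * M 0) {0..1}"
    using has_integral_mult_right[OF mom[of 0], of m] by simp
  show "m * M 0 \<le> Re (c * ?I)"
  proof (rule has_integral_le[OF 2 1])
    fix u :: real assume u: "u \<in> {0..1}"
    have "sqrt u \<in> {0..1}" using u by auto
    then have "m \<le> Re (c * exp (of_real (sqrt u) * z))" using H by blast
    then have "\<rho> u * m \<le> \<rho> u * Re (c * exp (of_real (sqrt u) * z))"
      using nn[OF u] by (rule mult_left_mono)
    moreover have "Re (c * (of_real (\<rho> u) * exp (of_real (sqrt u) * z))) = \<rho> u * Re (c * exp (of_real (sqrt u) * z))"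
      by (simp add: mult.left_commute[of c])
    ultimately show "m * \<rho> u \<le> Re (c * (of_real (\<rho> u) * exp (of_real (sqrt u) * z)))"
      by (simp add: mult.commute)
  qed
qed

lemma cone_exp: "cone z (exp z)"
  unfolding cone_def
  by (intro exI[of _ 1]) (auto dest: bspec[of _ _ 1])

lemma ball_parts: assumes "norm z < 1"
  shows "\<bar>Re z\<bar> < 1" "\<bar>Im z\<bar> < 1"
  using assms abs_Re_le_cmod[of z] abs_Im_le_cmod[of z] by linarith+

lemma cos_ge_cos1: fixes t :: real assumes "\<bar>t\<bar> \<le> 1" shows "cos 1 \<le> cos t"
proof -
  have "cos 1 \<le> cos \<bar>t\<bar>" using assms pi_gt3 by (intro cos_monotone_0_pi_le) auto
  then show ?thesis by simp
qed

lemma pt_re: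
  assumes z: "norm z < 1" and s: "s \<in> {0..1}"
  shows "exp (-1) * cos 1 \<le> Re (exp (of_real s * z))"
proof -
  have x: "\<bar>s * Re z\<bar> \<le> 1" "\<bar>s * Im z\<bar> \<le> 1"
    using ball_parts[OF z] s by (auto simp: abs_mult intro!: mult_le_one)
  have "exp (-1) \<le> exp (s * Re z)" using x by auto
  moreover have "cos 1 \<le> cos (s * Im z)" using x by (intro cos_ge_cos1)
  moreover have "0 \<le> cos (1::real)" using pi_gt3 by (intro cos_ge_zero) auto
  ultimately have "exp (-1) * cos 1 \<le> exp (s * Re z) * cos (s * Im z)"
    by (intro mult_mono) auto
  then show ?thesis by (simp add: Re_exp)
qed

lemma pt_1mz:
  assumes z: "norm z < 1" and s: "s \<in> {0..1}"
  shows "exp (-1) * ((1 - Re z) * cos 1) \<le> Re ((1 - z) * exp (of_real s * z))"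
proof -
  have x: "\<bar>s * Re z\<bar> \<le> 1" "\<bar>s * Im z\<bar> \<le> 1"
    using ball_parts[OF z] s by (auto simp: abs_mult intro!: mult_le_one)
  have c1: "0 \<le> cos (1::real)" using pi_gt3 by (intro cos_ge_zero) auto
  have xr: "0 < 1 - Re z" using ball_parts[OF z] by auto
  have ys: "0 \<le> Im z * sin (s * Im z)"
  proof (cases "Im z \<ge> 0")
    case True
    then have "0 \<le> sin (s * Im z)" using x s pi_gt3 by (intro sin_ge_zero) auto
    then show ?thesis using True by simp
  next
    case False
    then have "0 \<le> sin (-(s * Im z))" using x s pi_gt3 by (intro sin_ge_zero) (auto simp: mult_nonneg_nonpos)
    then have "sin (s * Im z) \<le> 0" by simp
    then show ?thesis using False by (simp add: mult_nonpos_nonpos)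
  qed
  have "(1 - Re z) * cos 1 \<le> (1 - Re z) * cos (s * Im z)"
    using xr x by (intro mult_left_mono cos_ge_cos1) auto
  also have "\<dots> \<le> (1 - Re z) * cos (s * Im z) + Im z * sin (s * Im z)" using ys by simp
  finally have A: "(1 - Re z) * cos 1 \<le> (1 - Re z) * cos (s * Im z) + Im z * sin (s * Im z)" .
  have "exp (-1) * ((1 - Re z) * cos 1) \<le> exp (s * Re z) * ((1 - Re z) * cos (s * Im z) + Im z * sin (s * Im z))"
    using x A xr c1 by (intro mult_mono) auto
  also have "\<dots> = Re ((1 - z) * exp (of_real s * z))"
    by (simp add: Re_exp Im_exp algebra_simps)
  finally show ?thesis .
qed



definition rot :: "complex \<Rightarrow> complex" where "rot z = cis (- Im z / 2)"
definition c1 :: "complex \<Rightarrow> complex" where "c1 z = (of_real (sin (1/2)) + \<i> * of_real (cos (1/2))) * rot z"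
definition c2 :: "complex \<Rightarrow> complex" where "c2 z = (of_real (sin (1/2)) - \<i> * of_real (cos (1/2))) * rot z"

lemma pt_sec1: "Re (c1 z * exp (of_real s * z)) = exp (s * Re z) * sin (1/2 - (s * Im z - Im z / 2))"
proof -
  have "sin (1/2 - (s * Im z - Im z / 2)) = sin (1/2) * (cos (s * Im z) * cos (Im z / 2) + sin (s * Im z) * sin (Im z / 2)) - cos (1/2) * (sin (s * Im z) * cos (Im z / 2) - cos (s * Im z) * sin (Im z / 2))"
    unfolding sin_diff cos_diff by (rule refl)
  note eq = this
  show ?thesis by (subst eq) (simp add: c1_def rot_def Re_exp Im_exp algebra_simps)
qed

lemma pt_sec2: "Re (c2 z * exp (of_real s * z)) = exp (s * Re z) * sin (1/2 + (s * Im z - Im z / 2))"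
proof -
  have "sin (1/2 + (s * Im z - Im z / 2)) = sin (1/2) * (cos (s * Im z) * cos (Im z / 2) + sin (s * Im z) * sin (Im z / 2)) + cos (1/2) * (sin (s * Im z) * cos (Im z / 2) - cos (s * Im z) * sin (Im z / 2))"
    unfolding sin_add cos_diff sin_diff by (rule refl)
  note eq = this
  show ?thesis by (subst eq) (simp add: c2_def rot_def Re_exp Im_exp algebra_simps)
qed

lemma pt_rot: "Re (rot z * exp (of_real s * z)) = exp (s * Re z) * cos (s * Im z - Im z / 2)"
  by (simp add: rot_def Re_exp Im_exp cos_diff algebra_simps)

lemma theta_bound: assumes z: "norm z < 1" and s: "s \<in> {0..1}"
  shows "\<bar>s * Im z - Im z / 2\<bar> \<le> 1/2"
proof -
  have "\<bar>s - 1/2\<bar> \<le> 1/2" using s by (auto simp: abs_if)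
  moreover have "\<bar>Im z\<bar> \<le> 1" using ball_parts[OF z] by simp
  ultimately have "\<bar>s - 1/2\<bar> * \<bar>Im z\<bar> \<le> 1/2 * 1" by (intro mult_mono) auto
  moreover have "s * Im z - Im z / 2 = (s - 1/2) * Im z" by (simp add: algebra_simps)
  ultimately show ?thesis by (simp add: abs_mult)
qed

lemma pt_sec1_nn: assumes "norm z < 1" "s \<in> {0..1}" shows "0 \<le> Re (c1 z * exp (of_real s * z))"
proof -
  have "-(1/2) \<le> s * Im z - Im z / 2 \<and> s * Im z - Im z / 2 \<le> 1/2" using theta_bound[OF assms] by linarith
  then show ?thesis unfolding pt_sec1 using pi_gt3
    by (intro mult_nonneg_nonneg sin_ge_zero) auto
qed

lemma pt_sec2_nn: assumes "norm z < 1" "s \<in> {0..1}" shows "0 \<le> Re (c2 z * exp (of_real s * z))"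
proof -
  have "-(1/2) \<le> s * Im z - Im z / 2 \<and> s * Im z - Im z / 2 \<le> 1/2" using theta_bound[OF assms] by linarith
  then show ?thesis unfolding pt_sec2 using pi_gt3
    by (intro mult_nonneg_nonneg sin_ge_zero) auto
qed

lemma pt_rot_ge: assumes z: "norm z < 1" and s: "s \<in> {0..1}"
  shows "exp (-1) * cos 1 \<le> Re (rot z * exp (of_real s * z))"
proof -
  have x: "\<bar>s * Re z\<bar> \<le> 1"
    using ball_parts[OF z] s by (auto simp: abs_mult intro!: mult_le_one)
  have "0 \<le> cos (1::real)" using pi_gt3 by (intro cos_ge_zero) auto
  moreover have "cos 1 \<le> cos (s * Im z - Im z / 2)" using theta_bound[OF z s] by (intro cos_ge_cos1) auto
  moreover have "exp (-1) \<le> exp (s * Re z)" using x by auto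
  ultimately show ?thesis unfolding pt_rot by (intro mult_mono) auto
qed

lemma cos1_pos: "0 < cos (1::real)" using pi_gt3 by (intro cos_gt_zero) auto

lemma sector:
  assumes z: "norm z < 1" and N: "cone z N" and D: "cone z D"
  shows "0 < Re N * Re D + Im N * Im D"
proof -
  have gen: "0 \<le> Re (c1 z * F) \<and> 0 \<le> Re (c2 z * F) \<and> 0 < Re (rot z * F)" if F: "cone z F" for F
  proof -
    obtain L where L: "L > 0" and P: "\<And>c m. (\<forall>s\<in>{0..1}. m \<le> Re (c * exp (of_real s * z))) \<Longrightarrow> m * L \<le> Re (c * F)"
      using F unfolding cone_def by blast
    have "0 * L \<le> Re (c1 z * F)" by (rule P) (use pt_sec1_nn[OF z] in auto)
    moreover have "0 * L \<le> Re (c2 z * F)" by (rule P) (use pt_sec2_nn[OF z] in auto)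
    moreover have "exp (-1) * cos 1 * L \<le> Re (rot z * F)" by (rule P) (use pt_rot_ge[OF z] in auto)
    moreover have "0 < exp (-1) * cos 1 * L" using L cos1_pos by simp
    ultimately show ?thesis by auto
  qed
  define S where "S = sin (1/2::real)"
  define C where "C = cos (1/2::real)"
  have C: "C > 0" unfolding C_def using pi_gt3 by (intro cos_gt_zero) auto
  have Spos: "S > 0" unfolding S_def using pi_gt3 by (intro sin_gt_zero) auto
  have CS: "C^2 - S^2 = cos 1" unfolding C_def S_def using cos_double[of "1/2::real"] by simp
  have sec: "C * \<bar>Im (rot z * F)\<bar> \<le> S * Re (rot z * F) \<and> 0 < Re (rot z * F)" if F: "cone z F" for F
  proof -
    have e1: "Re (c1 z * F) = S * Re (rot z * F) - C * Im (rot z * F)"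
      by (simp add: c1_def S_def C_def algebra_simps)
    have e2: "Re (c2 z * F) = S * Re (rot z * F) + C * Im (rot z * F)"
      by (simp add: c2_def S_def C_def algebra_simps)
    have g1: "0 \<le> S * Re (rot z * F) - C * Im (rot z * F)" using gen[OF F] e1 by linarith
    have g2: "0 \<le> S * Re (rot z * F) + C * Im (rot z * F)" using gen[OF F] e2 by linarith
    have "C * \<bar>Im (rot z * F)\<bar> \<le> S * Re (rot z * F)"
    proof (cases "Im (rot z * F) \<ge> 0")
      case True
      then have "C * \<bar>Im (rot z * F)\<bar> = C * Im (rot z * F)" by simp
      then show ?thesis using g1 by linarith
    next
      case False
      then have "C * \<bar>Im (rot z * F)\<bar> = - (C * Im (rot z * F))" by (simp add: algebra_simps)
      then show ?thesis using g2 by linarith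
    qed
    then show ?thesis using gen[OF F] by simp
  qed
  define a where "a = Re (rot z * N)"
  define b where "b = Im (rot z * N)"
  define c where "c = Re (rot z * D)"
  define d where "d = Im (rot z * D)"
  have hN: "C * \<bar>b\<bar> \<le> S * a" "0 < a" using sec[OF N] unfolding a_def b_def by auto
  have hD: "C * \<bar>d\<bar> \<le> S * c" "0 < c" using sec[OF D] unfolding c_def d_def by auto
  have "(C * \<bar>b\<bar>) * (C * \<bar>d\<bar>) \<le> (S * a) * (S * c)"
    using hN(1) hD(1) by (rule mult_mono) (use hN hD C Spos in auto)
  hence 1: "C^2 * \<bar>b * d\<bar> \<le> S^2 * (a * c)" by (simp add: power2_eq_square abs_mult mult_ac)
  have 2: "- (C^2 * \<bar>b * d\<bar>) \<le> C^2 * (b * d)"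
  proof -
    have "C^2 * (- \<bar>b * d\<bar>) \<le> C^2 * (b * d)"
      using C by (intro mult_left_mono) auto
    then show ?thesis by simp
  qed
  have "0 < cos 1 * (a * c)" using cos1_pos hN hD by simp
  also have "\<dots> = C^2 * (a*c) - S^2 * (a*c)" using CS by (simp add: algebra_simps)
  also have "\<dots> \<le> C^2 * (a * c + b * d)" using 1 2 by (simp add: algebra_simps)
  finally have "0 < a * c + b * d" using C by (simp add: zero_less_mult_iff)
  moreover have "a * c + b * d = (Re N * Re D + Im N * Im D) * (cos (Im z / 2) * cos (Im z / 2) + sin (Im z / 2) * sin (Im z / 2))"
    unfolding a_def b_def c_def d_def rot_def
    by (simp add: algebra_simps del: sin_cos_squared_add3 sin_cos_squared_add sin_cos_squared_add2)
  ultimately show ?thesis by (simp only: sin_cos_squared_add3 mult_1_right)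
qed

lemma sector_div:
  assumes z: "norm z < 1" and N: "cone z N" and D: "cone z D"
  shows "0 < Re (N / D)"
proof -
  have p: "0 < Re N * Re D + Im N * Im D" by (rule sector[OF z N D])
  have "D \<noteq> 0" using p by auto
  then have "0 < (Re D)^2 + (Im D)^2" by (simp add: sum_power2_gt_zero_iff complex_eq_iff)
  then show ?thesis using p by (simp add: Re_divide)
qed



lemma Gamma_plus1_pos: "(x::real) > 0 \<Longrightarrow> Gamma (x + 1) = x * Gamma x"
  by (rule Gamma_plus1) (auto dest: nonpos_Ints_nonpos)

definition KK :: "real \<Rightarrow> real" where "KK \<nu> = Gamma (\<nu> + 1) / (sqrt pi * Gamma (\<nu> + 1/2))"
definition M1 :: "real \<Rightarrow> nat \<Rightarrow> real" where "M1 \<nu> n = KK \<nu> * Beta ((real n + 1) / 2) (\<nu> + 1/2)"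
definition M2 :: "real \<Rightarrow> nat \<Rightarrow> real" where "M2 \<nu> n = KK \<nu> * (2*\<nu> - 1) * Beta ((real n + 3) / 2) (\<nu> - 1/2)"
definition rho1 :: "real \<Rightarrow> real \<Rightarrow> real" where "rho1 \<nu> u = KK \<nu> * (u powr (-1/2) * (1 - u) powr (\<nu> - 1/2))"
definition rho2 :: "real \<Rightarrow> real \<Rightarrow> real" where "rho2 \<nu> u = KK \<nu> * (2*\<nu> - 1) * (u powr (1/2) * (1 - u) powr (\<nu> - 3/2))"

lemma KK_pos: "\<nu> \<ge> 1/2 \<Longrightarrow> KK \<nu> > 0"
  unfolding KK_def by (intro divide_pos_pos mult_pos_pos) auto

lemma coeff_M1: assumes "\<nu> \<ge> 1/2" shows "BS_coeff \<nu> n = M1 \<nu> n / fact n"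
proof -
  have e: "(real n + 1) / 2 + (\<nu> + 1/2) = real n / 2 + \<nu> + 1" by (simp add: field_simps)
  have "Gamma (\<nu> + 1/2) > 0" using assms by auto
  moreover have "sqrt pi > 0" by simp
  moreover have "Gamma (real n / 2 + \<nu> + 1) > 0" using assms by (intro Gamma_real_pos) auto
  ultimately show ?thesis
    unfolding BS_coeff_def M1_def KK_def Beta_def e by (simp add: field_simps)
qed

lemma coeff_M2: assumes "\<nu> > 1/2" shows "real (Suc n) * BS_coeff \<nu> n = M2 \<nu> n / fact n"
proof -
  have e: "(real n + 3) / 2 + (\<nu> - 1/2) = real n / 2 + \<nu> + 1" by (simp add: field_simps)
  have g1: "Gamma ((real n + 3) / 2) = ((real n + 1)/2) * Gamma ((real n + 1)/2)"
    using Gamma_plus1_pos[of "(real n + 1)/2"] by (simp add: field_simps)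
  have g2: "Gamma (\<nu> + 1/2) = (\<nu> - 1/2) * Gamma (\<nu> - 1/2)"
    using Gamma_plus1_pos[of "\<nu> - 1/2"] assms by (simp add: field_simps)
  define A where "A = Gamma (\<nu> + 1)"
  define G where "G = Gamma ((real n + 1)/2)"
  define H where "H = Gamma (\<nu> - 1/2)"
  define Q where "Q = Gamma (real n / 2 + \<nu> + 1)"
  have "H > 0" unfolding H_def using assms by auto
  moreover have "sqrt pi > 0" by simp
  moreover have "Q > 0" unfolding Q_def using assms by (intro Gamma_real_pos) auto
  moreover have "\<nu> - 1/2 \<noteq> 0" using assms by simp
  ultimately have "real (Suc n) * (A * G / (sqrt pi * fact n * Q)) =
     A / (sqrt pi * ((\<nu> - 1/2) * H)) * (2*\<nu> - 1) * ((real n + 1)/2 * G * H / Q) / fact n"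
    by (simp add: field_simps)
  then show ?thesis
    unfolding BS_coeff_def M2_def KK_def Beta_def e g1 g2 A_def[symmetric] G_def[symmetric] H_def[symmetric] Q_def[symmetric]
    by simp
qed

lemma coeff_half: "real (Suc n) * BS_coeff (1/2) n = 1 / fact n"
proof -
  have g1: "Gamma (real n / 2 + 1/2 + 1) = ((real n + 1)/2) * Gamma ((real n + 1)/2)"
    using Gamma_plus1_pos[of "(real n + 1)/2"] by (simp add: field_simps)
  have g2: "Gamma (1/2 + 1 :: real) = sqrt pi / 2"
    using Gamma_plus1_pos[of "1/2"] by (simp add: Gamma_one_half_real)
  define G where "G = Gamma ((real n + 1)/2)"
  have "G > 0" unfolding G_def by auto
  then have nz: "sqrt pi * fact n * ((real n + 1)/2 * G) \<noteq> 0" by (simp add: add_pos_nonneg)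
  have "real (Suc n) * (sqrt pi / 2 * G / (sqrt pi * fact n * ((real n + 1)/2 * G))) = 1 / fact n"
    using nz by (simp add: divide_simps)
  then show ?thesis unfolding BS_coeff_def g1 g2 G_def[symmetric] by simp
qed

lemma BS0: "\<nu> \<ge> 1/2 \<Longrightarrow> BS_coeff \<nu> 0 = 1"
proof -
  assume "\<nu> \<ge> 1/2"
  then have "Gamma (\<nu> + 1) > 0" by auto
  then show ?thesis unfolding BS_coeff_def by (simp add: Gamma_one_half_real)
qed

lemma sqrt_pow_powr: assumes "u > 0" shows "sqrt u ^ n = u powr (real n / 2)"
  using powr_power[of u "1/2" n] assms by (simp add: powr_half_sqrt)

lemma mom1: assumes "\<nu> \<ge> 1/2"
  shows "((\<lambda>u. rho1 \<nu> u * sqrt u ^ n) has_integral M1 \<nu> n) {0..1}"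
proof -
  have B: "((\<lambda>t. KK \<nu> * (t powr ((real n + 1)/2 - 1) * (1 - t) powr ((\<nu> + 1/2) - 1))) has_integral M1 \<nu> n) {0..1}"
    unfolding M1_def using assms
    by (intro has_integral_mult_right has_integral_Beta_real) auto
  show ?thesis
  proof (rule has_integral_eq[OF _ B])
    fix u :: real assume u: "u \<in> {0..1}"
    show "KK \<nu> * (u powr ((real n + 1)/2 - 1) * (1 - u) powr ((\<nu> + 1/2) - 1)) = rho1 \<nu> u * sqrt u ^ n"
    proof (cases "u = 0")
      case True then show ?thesis by (simp add: rho1_def)
    next
      case False
      then have "u > 0" using u by auto
      then have "u powr ((real n + 1)/2 - 1) = u powr (-1/2) * sqrt u ^ n"
        by (simp add: sqrt_pow_powr powr_add[symmetric] field_simps)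
      then show ?thesis unfolding rho1_def by (simp add: mult_ac)
    qed
  qed
qed

lemma mom2: assumes "\<nu> > 1/2"
  shows "((\<lambda>u. rho2 \<nu> u * sqrt u ^ n) has_integral M2 \<nu> n) {0..1}"
proof -
  have B: "((\<lambda>t. KK \<nu> * (2*\<nu> - 1) * (t powr ((real n + 3)/2 - 1) * (1 - t) powr ((\<nu> - 1/2) - 1))) has_integral M2 \<nu> n) {0..1}"
    unfolding M2_def using assms
    by (intro has_integral_mult_right has_integral_Beta_real) auto
  show ?thesis
  proof (rule has_integral_eq[OF _ B])
    fix u :: real assume u: "u \<in> {0..1}"
    show "KK \<nu> * (2*\<nu> - 1) * (u powr ((real n + 3)/2 - 1) * (1 - u) powr ((\<nu> - 1/2) - 1)) = rho2 \<nu> u * sqrt u ^ n"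
    proof (cases "u = 0")
      case True then show ?thesis by (simp add: rho2_def)
    next
      case False
      then have "u > 0" using u by auto
      then have "u powr ((real n + 3)/2 - 1) = u powr (1/2) * sqrt u ^ n"
        by (simp add: sqrt_pow_powr powr_add[symmetric] field_simps)
      moreover have "(\<nu> - 1/2) - 1 = \<nu> - 3/2" by simp
      ultimately show ?thesis unfolding rho2_def by (simp add: mult_ac)
    qed
  qed
qed

lemma rho1_nn: "\<nu> \<ge> 1/2 \<Longrightarrow> u \<in> {0..1} \<Longrightarrow> 0 \<le> rho1 \<nu> u"
  unfolding rho1_def using KK_pos[of \<nu>] by auto

lemma rho2_nn: "\<nu> > 1/2 \<Longrightarrow> u \<in> {0..1} \<Longrightarrow> 0 \<le> rho2 \<nu> u"
  unfolding rho2_def using KK_pos[of \<nu>] by auto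

lemma Beta_pos: "(a::real) > 0 \<Longrightarrow> b > 0 \<Longrightarrow> Beta a b > 0"
  unfolding Beta_def by auto

lemma M1_pos: "\<nu> \<ge> 1/2 \<Longrightarrow> M1 \<nu> 0 > 0"
  unfolding M1_def using KK_pos[of \<nu>] by (auto intro!: mult_pos_pos Beta_pos)

lemma M2_pos: "\<nu> > 1/2 \<Longrightarrow> M2 \<nu> 0 > 0"
  unfolding M2_def using KK_pos[of \<nu>] by (auto intro!: mult_pos_pos Beta_pos)



lemma cone_re_pos: assumes z: "norm z < 1" and F: "cone z F" shows "0 < Re F"
proof -
  obtain L where L: "L > 0" and P: "\<And>c m. (\<forall>s\<in>{0..1}. m \<le> Re (c * exp (of_real s * z))) \<Longrightarrow> m * L \<le> Re (c * F)"
    using F unfolding cone_def by blast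
  have "exp (-1) * cos 1 * L \<le> Re (1 * F)" by (rule P) (use pt_re[OF z] in auto)
  moreover have "0 < exp (-1) * cos 1 * L" using L cos1_pos by simp
  ultimately show ?thesis by simp
qed

lemma cone_1mz_pos: assumes z: "norm z < 1" and F: "cone z F" shows "0 < Re ((1 - z) * F)"
proof -
  obtain L where L: "L > 0" and P: "\<And>c m. (\<forall>s\<in>{0..1}. m \<le> Re (c * exp (of_real s * z))) \<Longrightarrow> m * L \<le> Re (c * F)"
    using F unfolding cone_def by blast
  have "exp (-1) * ((1 - Re z) * cos 1) * L \<le> Re ((1 - z) * F)" by (rule P) (use pt_1mz[OF z] in auto)
  moreover have "0 < exp (-1) * ((1 - Re z) * cos 1) * L" using L cos1_pos ball_parts[OF z] by simp
  ultimately show ?thesis by simp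
qed

lemma inj_from_re_deriv:
  assumes d: "\<And>z. z \<in> ball 0 1 \<Longrightarrow> (f has_field_derivative f' z) (at z)"
    and p: "\<And>z. z \<in> ball 0 1 \<Longrightarrow> 0 < Re (f' z)"
  shows "inj_on f (ball (0::complex) 1)"
proof (rule inj_onI, rule ccontr)
  fix a b assume a: "a \<in> ball (0::complex) 1" and b: "b \<in> ball (0::complex) 1" and fab: "f a = f b" and ne: "a \<noteq> b"
  have seg: "closed_segment a b \<subseteq> ball 0 1"
    using a b by (simp add: closed_segment_subset)
  have dd: "((\<lambda>w. f w * cnj (b - a)) has_field_derivative f' u * cnj (b - a)) (at u)"
    if "u \<in> closed_segment a b" for u
  proof -
    have "u \<in> ball 0 1" using seg that by blast
    then show ?thesis by (rule DERIV_cmult_right[OF d])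
  qed
  have "\<exists>u. u \<in> closed_segment a b \<and> Re (f b * cnj (b - a)) - Re (f a * cnj (b - a)) = Re ((f' u * cnj (b - a)) * (b - a))"
    by (rule complex_mvt_line[of a b "\<lambda>w. f w * cnj (b - a)" "\<lambda>u. f' u * cnj (b - a)"]) (rule dd)
  then obtain u where u: "u \<in> closed_segment a b" and eq: "Re (f b * cnj (b - a)) - Re (f a * cnj (b - a)) = Re ((f' u * cnj (b - a)) * (b - a))"
    by blast
  have ns: "cnj (b - a) * (b - a) = of_real ((norm (b - a))^2)"
    using complex_norm_square[of "b - a"] by (simp add: mult.commute)
  have "(f' u * cnj (b - a)) * (b - a) = f' u * of_real ((norm (b - a))^2)"
    by (simp only: mult.assoc ns)
  moreover have rr: "\<And>w r. Re (w * of_real r) = Re w * r" by simp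
  ultimately have "Re ((f' u * cnj (b - a)) * (b - a)) = Re (f' u) * (norm (b - a))^2" by (simp only: rr)
  moreover have "0 < Re (f' u) * (norm (b - a))^2" using p[of u] u seg ne by auto
  moreover have "Re (f b * cnj (b - a)) - Re (f a * cnj (b - a)) = 0" by (simp only: fab diff_self)
  ultimately show False using eq by linarith
qed

definition Dv :: "real \<Rightarrow> complex \<Rightarrow> complex" where
  "Dv \<nu> z = (\<Sum>n. of_real (real (Suc n) * BS_coeff \<nu> n) * z^n)"

lemma BS_facts: assumes "\<nu> \<ge> 1/2"
  shows "(\<lambda>n. of_real (BS_coeff \<nu> n) * z^n) sums BesselStruve \<nu> z \<and> cone z (BesselStruve \<nu> z)"
proof -
  have fe: "(\<lambda>n. of_real (BS_coeff \<nu> n) * z^n) = (\<lambda>n. of_real (M1 \<nu> n / fact n) * z^n)"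
    using coeff_M1[OF assms] by simp
  have B: "BesselStruve \<nu> z = (\<Sum>n. of_real (M1 \<nu> n / fact n) * z^n)"
    unfolding BesselStruve_def using fe by simp
  show ?thesis unfolding fe B
    using series_integral[OF rho1_nn[OF assms] mom1[OF assms]] cone_integral[OF rho1_nn[OF assms] mom1[OF assms] M1_pos[OF assms]]
    by blast
qed

lemma Dv_facts: assumes "\<nu> \<ge> 1/2"
  shows "(\<lambda>n. of_real (real (Suc n) * BS_coeff \<nu> n) * z^n) sums Dv \<nu> z \<and> cone z (Dv \<nu> z)"
proof (cases "\<nu> = 1/2")
  case True
  have fe: "(\<lambda>n. of_real (real (Suc n) * BS_coeff \<nu> n) * z^n) = (\<lambda>n. z^n /\<^sub>R fact n)"
  proof (rule ext)
    fix n
    have "(of_real (real (Suc n) * BS_coeff \<nu> n) :: complex) = of_real (1 / fact n)"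
      unfolding True by (simp only: coeff_half)
    then have "of_real (real (Suc n) * BS_coeff \<nu> n) * z^n = of_real (1 / fact n) * z^n"
      by (simp only:)
    then show "of_real (real (Suc n) * BS_coeff \<nu> n) * z^n = z^n /\<^sub>R fact n"
      by (simp add: scaleR_conv_of_real field_simps)
  qed
  have s: "(\<lambda>n. of_real (real (Suc n) * BS_coeff \<nu> n) * z^n) sums exp z"
    unfolding fe by (rule exp_converges)
  then have "Dv \<nu> z = exp z" unfolding Dv_def by (rule sums_unique[symmetric])
  then show ?thesis using s cone_exp by simp
next
  case False
  then have nu: "\<nu> > 1/2" using assms by simp
  have fe: "(\<lambda>n. of_real (real (Suc n) * BS_coeff \<nu> n) * z^n) = (\<lambda>n. of_real (M2 \<nu> n / fact n) * z^n)"
    using coeff_M2[OF nu] by simp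
  have B: "Dv \<nu> z = (\<Sum>n. of_real (M2 \<nu> n / fact n) * z^n)"
    unfolding Dv_def using fe by simp
  show ?thesis unfolding fe B
    using series_integral[OF rho2_nn[OF nu] mom2[OF nu]] cone_integral[OF rho2_nn[OF nu] mom2[OF nu] M2_pos[OF nu]]
    by blast
qed

lemma f_deriv: assumes "\<nu> \<ge> 1/2"
  shows "((\<lambda>z. z * BesselStruve \<nu> z) has_field_derivative Dv \<nu> z) (at z)"
proof -
  define A where "A n = (if n = 0 then 0 else (of_real (BS_coeff \<nu> (n - 1)) :: complex))" for n
  have S: "(\<lambda>n. A n * y^n) sums (y * BesselStruve \<nu> y)" for y
  proof -
    have "(\<lambda>n. y * (of_real (BS_coeff \<nu> n) * y^n)) sums (y * BesselStruve \<nu> y)"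
      using BS_facts[OF assms, of y] by (intro sums_mult) auto
    moreover have "(\<lambda>n. y * (of_real (BS_coeff \<nu> n) * y^n)) = (\<lambda>n. A (Suc n) * y^(Suc n))"
      by (simp add: A_def mult_ac)
    ultimately have "(\<lambda>n. A (Suc n) * y^(Suc n)) sums (y * BesselStruve \<nu> y)" by simp
    then have "(\<lambda>n. A n * y^n) sums (y * BesselStruve \<nu> y + A 0 * y^0)"
      by (subst (asm) sums_Suc_iff[where f = "\<lambda>n. A n * y^n"]) 
    then show ?thesis by (simp add: A_def)
  qed
  have feq: "(\<lambda>z. z * BesselStruve \<nu> z) = (\<lambda>z. \<Sum>n. A n * z^n)"
    using S by (auto intro!: ext sums_unique)
  have "((\<lambda>z. \<Sum>n. A n * z^n) has_field_derivative (\<Sum>n. diffs A n * z^n)) (at z)"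
    by (rule termdiffs_strong_converges_everywhere) (use S in \<open>auto intro: sums_summable\<close>)
  moreover have "diffs A = (\<lambda>n. of_real (real (Suc n) * BS_coeff \<nu> n))"
    by (auto simp: diffs_def A_def)
  ultimately show ?thesis unfolding feq Dv_def by simp
qed

lemma Dv0: "\<nu> \<ge> 1/2 \<Longrightarrow> Dv \<nu> 0 = 1"
  unfolding Dv_def using powser_zero[of "\<lambda>n. of_real (real (Suc n) * BS_coeff \<nu> n) :: complex"]
  by (simp add: BS0)



theorem theorem3:
  fixes \<nu> :: real
  assumes "\<nu> \<ge> 1/2"
  shows "starlike_disc (\<lambda>z. z * BesselStruve \<nu> z)
    \<and> starlike_disc (\<lambda>z. z)
    \<and> close_to_convex_wrt (\<lambda>z. z * BesselStruve \<nu> z) (\<lambda>z. z)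
    \<and> starlike_disc (\<lambda>z. z / (1 - z))
    \<and> close_to_convex_wrt (\<lambda>z. z * BesselStruve \<nu> z) (\<lambda>z. z / (1 - z))"
proof -
  let ?f = "\<lambda>z. z * BesselStruve \<nu> z"
  let ?g = "\<lambda>z::complex. z / (1 - z)"
  have der: "\<And>z. (?f has_field_derivative Dv \<nu> z) (at z)" using f_deriv[OF assms] .
  have dfz: "\<And>z. deriv ?f z = Dv \<nu> z" using der by (rule DERIV_imp_deriv)
  have hol: "?f holomorphic_on ball 0 1"
    unfolding holomorphic_on_def field_differentiable_def using der has_field_derivative_at_within by blast
  have normf: "normalized_on_disc ?f"
    unfolding normalized_on_disc_def using hol dfz Dv0[OF assms] by simp
  have reD: "\<And>z. z \<in> ball 0 1 \<Longrightarrow> 0 < Re (Dv \<nu> z)"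
    using cone_re_pos Dv_facts[OF assms] by auto
  have injf: "inj_on ?f (ball 0 1)" by (rule inj_from_re_deriv[OF der reD])
  have star1: "starlike_disc ?f"
    unfolding starlike_disc_def
  proof (intro conjI normf injf ballI impI)
    fix z :: complex assume z: "z \<in> ball 0 1" "z \<noteq> 0"
    have "z * deriv ?f z / ?f z = Dv \<nu> z / BesselStruve \<nu> z" using z(2) by (simp add: dfz)
    moreover have "0 < Re (Dv \<nu> z / BesselStruve \<nu> z)"
      using z(1) Dv_facts[OF assms, of z] BS_facts[OF assms, of z] by (intro sector_div) auto
    ultimately show "0 < Re (z * deriv ?f z / ?f z)" by simp
  qed
  have star2: "starlike_disc (\<lambda>z. z)"
    unfolding starlike_disc_def normalized_on_disc_def by auto
  have ctc1: "close_to_convex_wrt ?f (\<lambda>z. z)"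
    unfolding close_to_convex_wrt_def
  proof (intro conjI normf exI[of _ 0] ballI)
    fix z :: complex assume z: "z \<in> ball 0 1"
    show "0 < Re (exp (\<i> * of_real 0) * ctc_quot ?f (\<lambda>z. z) z)"
    proof (cases "z = 0")
      case True then show ?thesis by (simp add: ctc_quot_def dfz Dv0[OF assms])
    next
      case False then show ?thesis using reD[OF z] by (simp add: ctc_quot_def dfz)
    qed
  qed
  have dg: "(?g has_field_derivative 1 / (1 - z)^2) (at z)" if "z \<noteq> 1" for z :: complex
    using that by (auto intro!: derivative_eq_intros simp: field_simps power2_eq_square)
  have dgz: "deriv ?g z = 1 / (1 - z)^2" if "z \<in> ball 0 1" for z :: complex
    using that by (intro DERIV_imp_deriv dg) auto
  have star3: "starlike_disc ?g"
    unfolding starlike_disc_def normalized_on_disc_def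
  proof (intro conjI ballI impI)
    show "?g holomorphic_on ball 0 1" by (intro holomorphic_intros) auto
    show "?g 0 = 0" by simp
    show "deriv ?g 0 = 1" using dgz[of 0] by simp
    show "inj_on ?g (ball 0 1)"
    proof (rule inj_onI)
      fix z w :: complex assume a: "z \<in> ball 0 1" "w \<in> ball 0 1" "?g z = ?g w"
      have n1: "1 - z \<noteq> 0" "1 - w \<noteq> 0" using a by auto
      have "z * (1 - w) = w * (1 - z)" using a(3) n1 by (simp add: divide_eq_eq eq_divide_eq)
      then show "z = w" by (simp add: algebra_simps)
    qed
    fix z :: complex assume z: "z \<in> ball 0 1" "z \<noteq> 0"
    have r: "\<bar>Re z\<bar> < 1" using ball_parts[of z] z by auto
    have nz: "1 - z \<noteq> 0" using z by auto
    have aux: "\<And>a b::complex. a \<noteq> 0 \<Longrightarrow> b \<noteq> 0 \<Longrightarrow> a*(1/b^2)/(a/b) = 1/b"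
      by (simp add: power2_eq_square)
    have "z * deriv ?g z / ?g z = 1 / (1 - z)" unfolding dgz[OF z(1)] using z(2) nz by (rule aux)
    moreover have "0 < Re (1 / (1 - z))"
    proof -
      have "0 < Re (1 - z)" using r by simp
      moreover have "0 < (Re (1 - z))^2 + (Im (1 - z))^2" using \<open>0 < Re (1 - z)\<close> by (simp add: add_pos_nonneg)
      ultimately show ?thesis by (simp add: Re_divide)
    qed
    ultimately show "0 < Re (z * deriv ?g z / ?g z)" by simp
  qed
  have ctc2: "close_to_convex_wrt ?f ?g"
    unfolding close_to_convex_wrt_def
  proof (intro conjI normf exI[of _ 0] ballI)
    fix z :: complex assume z: "z \<in> ball 0 1"
    show "0 < Re (exp (\<i> * of_real 0) * ctc_quot ?f ?g z)"
    proof (cases "z = 0")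
      case True then show ?thesis using dgz[of 0] by (simp add: ctc_quot_def dfz Dv0[OF assms])
    next
      case False
      have nz: "1 - z \<noteq> 0" using z by auto
      have "ctc_quot ?f ?g z = (1 - z) * Dv \<nu> z" using False nz by (simp add: ctc_quot_def dfz field_simps)
      moreover have "0 < Re ((1 - z) * Dv \<nu> z)"
        using z Dv_facts[OF assms, of z] by (intro cone_1mz_pos) auto
      ultimately show ?thesis by simp
    qed
  qed
  show ?thesis using star1 star2 ctc1 star3 ctc2 by blast
qed


end
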